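(* Consider the following second-order cone optimal control problem over time steps $k=0,\dots,K-1$ and EVs $n=1,\dots,N$: \begin{align*} \min\;& \sum_{n=1}^N\sum_{k=0}^{K-1} q_n\,(s_n(k+1)-1)^2 + r_n\,(i_n(k))^2\\ \text{s.t. }& T(k+1)=\tau T(k)+\gamma e(k)+\rho T_a(k),\\ & e(k)\ge (i_{\text{total}}(k))^2,\\ & s_n(k+1)=s_n(k)+\eta_n i_n(k),\\ & i_{\text{total}}(k)=i_d(k)+\sum_{n=1}^N i_n(k),\\ & T(k+1)\le T^{\max},\\ & s_n(k+1)\in[\hat s_n(k+1),1],\\ & i_n(k)\in[0,i_n^{\max}],\\ & T(0)=T_{\text{meas}},\quad s_n(0)=s_{\text{meas},n}. \end{align*} Take an optimal solution together with associated Lagrange multipliers: $\mu_T^{k+1}\ge 0$ for the constraint $T(k+1)\le T^{\max}$, and $\mu_e^k\ge 0$ for the constraint $e(k)\ge(i_{\text{total}}(k))^2$. Then $k+1$ is the last time instance for which the temperature limit $T(k+1)\le T^{\max}$ is strictly active if and only if $k$ is the largest integer for which the relaxed constraint $e(k)\ge (i_{\text{total}}(k))^2$ is tight.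
   Context: Parameters: - $\tau=e^{-b\Delta t}\in(0,1)$ with $b,\Delta t>0$, and $\rho=1-\tau$; - $\gamma>0$; - $T_a(k)$ is a given ambient temperature sequence; - $i_d(k)\ge0$ is a given background current; - $q_n>0$, $r_n\ge 0$, $\eta_n>0$ and $i_n^{\max}>0$ are EV parameters; - $\hat s_n(k+1)=\bar s_n$ if $k+1\ge\bar k_n$ and $0$ otherwise, where $\bar s_n\in[0,1]$ and $\bar k_n\in\{0,\dots,K\}$. Following the paper's convention, the temperature limit is "strictly active" at $k+1$ when its multiplier satisfies $\mu_T^{k+1}>0$. The relaxed constraint is "tight" at $k$ when its multiplier satisfies $\mu_e^k>0$, in which case $e(k)=(i_{\text{total}}(k))^2$. *)

theory Defs
  imports Complex_Main
begin

record evprob =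
  pK :: nat
  pN :: nat
  ptau :: real
  prho :: real
  pgam :: real
  pTa :: "nat \<Rightarrow> real"
  pid :: "nat \<Rightarrow> real"
  pq :: "nat \<Rightarrow> real"
  pr :: "nat \<Rightarrow> real"
  peta :: "nat \<Rightarrow> real"
  pimax :: "nat \<Rightarrow> real"
  pTmax :: real
  pTmeas :: real
  psmeas :: "nat \<Rightarrow> real"
  psbar :: "nat \<Rightarrow> real"
  pkbar :: "nat \<Rightarrow> nat"

text \<open>Decision variables: T(k), e(k), s_n(k) (written sv x n k), i_n(k) (iv x n k),
  i_total(k).\<close>
record evsol =
  Tv :: "nat \<Rightarrow> real"
  ev :: "nat \<Rightarrow> real"
  sv :: "nat \<Rightarrow> nat \<Rightarrow> real"
  iv :: "nat \<Rightarrow> nat \<Rightarrow> real"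
  itv :: "nat \<Rightarrow> real"

text \<open>Lagrange multipliers, one for each constraint. muT is indexed by the time
  instance k+1 of the constraint T(k+1) <= Tmax; muE k belongs to e(k) >= i_total(k)^2;
  all other multipliers are indexed by (n and) k of the constraint as written.\<close>
record evmult =
  lamT :: "nat \<Rightarrow> real"
  muE :: "nat \<Rightarrow> real"
  lamS :: "nat \<Rightarrow> nat \<Rightarrow> real"
  lamI :: "nat \<Rightarrow> real"
  muT :: "nat \<Rightarrow> real"
  muSlo :: "nat \<Rightarrow> nat \<Rightarrow> real"
  muShi :: "nat \<Rightarrow> nat \<Rightarrow> real"
  muIlo :: "nat \<Rightarrow> nat \<Rightarrow> real"
  muIhi :: "nat \<Rightarrow> nat \<Rightarrow> real"
  lamT0 :: real
  lamS0 :: "nat \<Rightarrow> real"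

definition shat :: "evprob \<Rightarrow> nat \<Rightarrow> nat \<Rightarrow> real" where
  "shat P n k = (if k \<ge> pkbar P n then psbar P n else 0)"

definition cost :: "evprob \<Rightarrow> evsol \<Rightarrow> real" where
  "cost P x = (\<Sum>n\<in>{1..pN P}. \<Sum>k<pK P.
      pq P n * (sv x n (k+1) - 1)^2 + pr P n * (iv x n k)^2)"

definition feasible :: "evprob \<Rightarrow> evsol \<Rightarrow> bool" where
  "feasible P x \<longleftrightarrow>
     (\<forall>k<pK P. Tv x (k+1) = ptau P * Tv x k + pgam P * ev x k + prho P * pTa P k) \<and>
     (\<forall>k<pK P. ev x k \<ge> (itv x k)^2) \<and>
     (\<forall>n\<in>{1..pN P}. \<forall>k<pK P. sv x n (k+1) = sv x n k + peta P n * iv x n k) \<and>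
     (\<forall>k<pK P. itv x k = pid P k + (\<Sum>n\<in>{1..pN P}. iv x n k)) \<and>
     (\<forall>k<pK P. Tv x (k+1) \<le> pTmax P) \<and>
     (\<forall>n\<in>{1..pN P}. \<forall>k<pK P. shat P n (k+1) \<le> sv x n (k+1) \<and> sv x n (k+1) \<le> 1) \<and>
     (\<forall>n\<in>{1..pN P}. \<forall>k<pK P. 0 \<le> iv x n k \<and> iv x n k \<le> pimax P n) \<and>
     Tv x 0 = pTmeas P \<and>
     (\<forall>n\<in>{1..pN P}. sv x n 0 = psmeas P n)"

definition lagrangian :: "evprob \<Rightarrow> evmult \<Rightarrow> evsol \<Rightarrow> real" where
  "lagrangian P m x =
     cost P x
   + (\<Sum>k<pK P. lamT m k * (Tv x (k+1) - ptau P * Tv x k - pgam P * ev x k - prho P * pTa P k))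
   + (\<Sum>k<pK P. muE m k * ((itv x k)^2 - ev x k))
   + (\<Sum>n\<in>{1..pN P}. \<Sum>k<pK P. lamS m n k * (sv x n (k+1) - sv x n k - peta P n * iv x n k))
   + (\<Sum>k<pK P. lamI m k * (itv x k - pid P k - (\<Sum>n\<in>{1..pN P}. iv x n k)))
   + (\<Sum>k<pK P. muT m (k+1) * (Tv x (k+1) - pTmax P))
   + (\<Sum>n\<in>{1..pN P}. \<Sum>k<pK P. muSlo m n k * (shat P n (k+1) - sv x n (k+1)))
   + (\<Sum>n\<in>{1..pN P}. \<Sum>k<pK P. muShi m n k * (sv x n (k+1) - 1))
   + (\<Sum>n\<in>{1..pN P}. \<Sum>k<pK P. muIlo m n k * (- iv x n k))
   + (\<Sum>n\<in>{1..pN P}. \<Sum>k<pK P. muIhi m n k * (iv x n k - pimax P n))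
   + lamT0 m * (Tv x 0 - pTmeas P)
   + (\<Sum>n\<in>{1..pN P}. lamS0 m n * (sv x n 0 - psmeas P n))"

definition sol_step :: "evsol \<Rightarrow> real \<Rightarrow> evsol \<Rightarrow> evsol" where
  "sol_step x t d =
     \<lparr>Tv = (\<lambda>k. Tv x k + t * Tv d k), ev = (\<lambda>k. ev x k + t * ev d k),
      sv = (\<lambda>n k. sv x n k + t * sv d n k), iv = (\<lambda>n k. iv x n k + t * iv d n k),
      itv = (\<lambda>k. itv x k + t * itv d k)\<rparr>"

text \<open>KKT conditions: m is a vector of Lagrange multipliers associated with x:
  dual feasibility, complementary slackness, and stationarity of the Lagrangian
  (all directional derivatives of L(., m) at x vanish, i.e. grad_x L = 0).\<close>
definition lagrange_multipliers :: "evprob \<Rightarrow> evmult \<Rightarrow> evsol \<Rightarrow> bool" where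
  "lagrange_multipliers P m x \<longleftrightarrow>
     (\<forall>k<pK P. muE m k \<ge> 0 \<and> muE m k * ((itv x k)^2 - ev x k) = 0) \<and>
     (\<forall>k<pK P. muT m (k+1) \<ge> 0 \<and> muT m (k+1) * (Tv x (k+1) - pTmax P) = 0) \<and>
     (\<forall>n\<in>{1..pN P}. \<forall>k<pK P.
        muSlo m n k \<ge> 0 \<and> muSlo m n k * (shat P n (k+1) - sv x n (k+1)) = 0 \<and>
        muShi m n k \<ge> 0 \<and> muShi m n k * (sv x n (k+1) - 1) = 0 \<and>
        muIlo m n k \<ge> 0 \<and> muIlo m n k * (- iv x n k) = 0 \<and>
        muIhi m n k \<ge> 0 \<and> muIhi m n k * (iv x n k - pimax P n) = 0) \<and>
     (\<forall>d. ((\<lambda>t. lagrangian P m (sol_step x t d)) has_real_derivative 0) (at 0))"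

end

theory Submission imports Defs begin
lemma ite01: "(if Q then 1 else 0) * (a::real) = (if Q then a else 0)" by simp

lemma ite0: "(if Q then a else 0) * (b::real) = (if Q then a*b else 0)" by simp

lemma ev_dir:
  assumes LM: "lagrange_multipliers P m x" and k: "k < pK P"
  shows "muE m k = - pgam P * lamT m k"
proof -
  define d where "d = \<lparr>Tv = (\<lambda>_. 0), ev = (\<lambda>j. if j = k then 1 else 0), sv = (\<lambda>_ _. 0),
     iv = (\<lambda>_ _. 0), itv = (\<lambda>_. 0)\<rparr>"
  have 0: "((\<lambda>t. lagrangian P m (sol_step x t d)) has_real_derivative 0) (at 0)"
    using LM unfolding lagrange_multipliers_def by blast
  have 1: "((\<lambda>t. lagrangian P m (sol_step x t d)) has_real_derivative (- pgam P * lamT m k - muE m k)) (at 0)"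
    unfolding lagrangian_def cost_def sol_step_def d_def
    apply simp
    apply (rule derivative_eq_intros refl)+
    using k apply (simp add: of_bool_def[symmetric] sum.distrib)
    using k apply (simp add: sum_negf mult.assoc of_bool_def ite01 ite0)
    done
  show ?thesis using DERIV_unique[OF 0 1] by simp
qed
lemma T_dir:
  assumes LM: "lagrange_multipliers P m x" and k: "k < pK P"
  shows "lamT m k - (if k+1 < pK P then ptau P * lamT m (k+1) else 0) + muT m (k+1) = 0"
proof -
  define d where "d = \<lparr>Tv = (\<lambda>j. if j = k+1 then 1 else 0), ev = (\<lambda>_. 0), sv = (\<lambda>_ _. 0),
     iv = (\<lambda>_ _. 0), itv = (\<lambda>_. 0)\<rparr>"
  have 0: "((\<lambda>t. lagrangian P m (sol_step x t d)) has_real_derivative 0) (at 0)"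
    using LM unfolding lagrange_multipliers_def by blast
  have 1: "((\<lambda>t. lagrangian P m (sol_step x t d)) has_real_derivative
     (lamT m k - (if k+1 < pK P then ptau P * lamT m (k+1) else 0) + muT m (k+1))) (at 0)"
    unfolding lagrangian_def cost_def sol_step_def d_def
    apply (simp split del: if_split)
    apply (rule derivative_eq_intros refl)+
    using k apply (simp add: of_bool_def[symmetric] sum.distrib)
    using k apply (simp add: sum_negf mult.assoc of_bool_def ite01 ite0 sum_subtractf left_diff_distrib)
    done
  show ?thesis using DERIV_unique[OF 0 1] by simp
qed

lemma chain:
  fixes L mu :: "nat \<Rightarrow> real" and K :: nat
  assumes tau: "tau > 0" and mu: "\<forall>k<K. mu (k+1) \<ge> 0" and last: "K > 0 \<Longrightarrow> L (K-1) = mu K"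
    and rec: "\<forall>k. k+1 < K \<longrightarrow> L k = tau * L (k+1) + mu (k+1)"
  shows "\<forall>k<K. 0 \<le> L k \<and> (0 < L k \<longleftrightarrow> (\<exists>j. k<j \<and> j\<le>K \<and> 0 < mu j))"
proof -
  have "\<forall>k. k<K \<longrightarrow> K - 1 - k = n \<longrightarrow> 0 \<le> L k \<and> (0 < L k \<longleftrightarrow> (\<exists>j. k<j \<and> j\<le>K \<and> 0 < mu j))" for n
  proof (induction n)
    case 0
    show ?case
    proof (intro allI impI)
      fix k assume "k < K" "K - 1 - k = 0"
      hence kK: "k = K - 1" by simp
      hence "L k = mu K" using last \<open>k<K\<close> by simp
      moreover have "mu K \<ge> 0" using mu \<open>k<K\<close> kK by (metis Suc_eq_plus1 Suc_pred' gr_implies_not0 not_gr_zero lessI)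
      moreover have "(\<exists>j. k<j \<and> j\<le>K \<and> 0 < mu j) \<longleftrightarrow> 0 < mu K"
        using kK \<open>k<K\<close> by (metis Suc_leI Suc_pred' le_antisym less_nat_zero_code not_gr_zero order_refl)
      ultimately show "0 \<le> L k \<and> (0 < L k \<longleftrightarrow> (\<exists>j. k<j \<and> j\<le>K \<and> 0 < mu j))" by simp
    qed
  next
    case (Suc n)
    show ?case
    proof (intro allI impI)
      fix k assume kK: "k < K" "K - 1 - k = Suc n"
      hence k1: "k+1 < K" "K - 1 - (k+1) = n" by auto
      have IH: "0 \<le> L (k+1) \<and> (0 < L (k+1) \<longleftrightarrow> (\<exists>j. k+1<j \<and> j\<le>K \<and> 0 < mu j))"
        using Suc.IH k1 by blast
      have Lk: "L k = tau * L (k+1) + mu (k+1)" using rec k1 by blast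
      have m: "mu (k+1) \<ge> 0" using mu kK by blast
      have "0 \<le> L k" using Lk IH m tau by simp
      moreover have "0 < L k \<longleftrightarrow> 0 < L (k+1) \<or> 0 < mu (k+1)"
      proof -
        have "0 < L (k+1) \<longleftrightarrow> 0 < tau * L (k+1)" using tau by (simp add: zero_less_mult_iff)
        moreover have "0 \<le> tau * L (k+1)" using tau IH by simp
        ultimately show ?thesis using Lk m by linarith
      qed
      moreover have "(\<exists>j. k<j \<and> j\<le>K \<and> 0 < mu j) \<longleftrightarrow> (\<exists>j. k+1<j \<and> j\<le>K \<and> 0 < mu j) \<or> 0 < mu (k+1)"
      proof
        assume "\<exists>j. k<j \<and> j\<le>K \<and> 0 < mu j"
        then obtain j where j: "k<j" "j\<le>K" "0 < mu j" by blast
        show "(\<exists>j. k+1<j \<and> j\<le>K \<and> 0 < mu j) \<or> 0 < mu (k+1)"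
        proof (cases "j = k+1")
          case True thus ?thesis using j by simp
        next
          case False hence "k+1<j" using j by simp
          thus ?thesis using j by blast
        qed
      next
        assume "(\<exists>j. k+1<j \<and> j\<le>K \<and> 0 < mu j) \<or> 0 < mu (k+1)"
        thus "\<exists>j. k<j \<and> j\<le>K \<and> 0 < mu j" using k1 by (metis Suc_eq_plus1 Suc_lessD less_imp_le_nat lessI)
      qed
      ultimately show "0 \<le> L k \<and> (0 < L k \<longleftrightarrow> (\<exists>j. k<j \<and> j\<le>K \<and> 0 < mu j))" using IH by blast
    qed
  qed
  thus ?thesis by blast
qed

theorem corollary1:
  fixes P :: evprob and x :: evsol and m :: evmult and b dt :: real
  assumes "b > 0" and "dt > 0"
    and "ptau P = exp (- b * dt)" and "prho P = 1 - ptau P"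
    and "pgam P > 0"
    and "\<forall>k. pid P k \<ge> 0"
    and "\<forall>n\<in>{1..pN P}. pq P n > 0 \<and> pr P n \<ge> 0 \<and> peta P n > 0 \<and> pimax P n > 0"
    and "\<forall>n\<in>{1..pN P}. 0 \<le> psbar P n \<and> psbar P n \<le> 1 \<and> pkbar P n \<le> pK P"
    and "feasible P x"
    and "\<forall>y. feasible P y \<longrightarrow> cost P x \<le> cost P y"
    and "lagrange_multipliers P m x"
  shows "\<forall>k<pK P.
           (muT m (k+1) > 0 \<and> (\<forall>j. k+1 < j \<and> j \<le> pK P \<longrightarrow> \<not> muT m j > 0))
           \<longleftrightarrow> (muE m k > 0 \<and> (\<forall>j. k < j \<and> j < pK P \<longrightarrow> \<not> muE m j > 0))"
proof -
  note LM = assms(11)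
  define K where "K = pK P"
  define L where "L = (\<lambda>k. - lamT m k)"
  have tau: "ptau P > 0" using assms(3) by simp
  have mu: "\<forall>k<K. muT m (k+1) \<ge> 0" using LM unfolding lagrange_multipliers_def K_def by blast
  have last: "L (K-1) = muT m K" if "K > 0"
  proof -
    have "K - 1 < pK P" using that K_def by simp
    from T_dir[OF LM this] show ?thesis using that unfolding L_def K_def by simp
  qed
  have rec: "\<forall>k. k+1 < K \<longrightarrow> L k = ptau P * L (k+1) + muT m (k+1)"
  proof (intro allI impI)
    fix k assume "k+1 < K"
    hence "k < pK P" "k+1 < pK P" unfolding K_def by auto
    from T_dir[OF LM this(1)] this(2) show "L k = ptau P * L (k+1) + muT m (k+1)" unfolding L_def by simp
  qed
  have C: "\<forall>k<K. 0 \<le> L k \<and> (0 < L k \<longleftrightarrow> (\<exists>j. k<j \<and> j\<le>K \<and> 0 < muT m j))"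
    using chain[OF tau mu last rec] by blast
  have E: "0 < muE m k \<longleftrightarrow> (\<exists>j. k<j \<and> j\<le>K \<and> 0 < muT m j)" if "k < K" for k
  proof -
    have "muE m k = pgam P * L k" using ev_dir[OF LM] that unfolding L_def K_def by simp
    hence "0 < muE m k \<longleftrightarrow> 0 < L k" using assms(5) by (simp add: zero_less_mult_iff)
    thus ?thesis using C that by blast
  qed
  show ?thesis unfolding K_def[symmetric]
  proof (intro allI impI)
    fix k assume k: "k < K"
    show "(muT m (k+1) > 0 \<and> (\<forall>j. k+1 < j \<and> j \<le> K \<longrightarrow> \<not> muT m j > 0))
           \<longleftrightarrow> (muE m k > 0 \<and> (\<forall>j. k < j \<and> j < K \<longrightarrow> \<not> muE m j > 0))"
    proof
      assume A: "muT m (k+1) > 0 \<and> (\<forall>j. k+1 < j \<and> j \<le> K \<longrightarrow> \<not> muT m j > 0)"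
      have "muE m k > 0" using E[OF k] A k by (metis Suc_eq_plus1 Suc_leI lessI)
      moreover have "\<not> muE m j > 0" if jj: "k < j" "j < K" for j
      proof
        assume "muE m j > 0"
        then obtain i where "j<i" "i\<le>K" "0 < muT m i" using E[OF jj(2)] by blast
        thus False using A jj by auto
      qed
      ultimately show "muE m k > 0 \<and> (\<forall>j. k < j \<and> j < K \<longrightarrow> \<not> muE m j > 0)" by blast
    next
      assume B: "muE m k > 0 \<and> (\<forall>j. k < j \<and> j < K \<longrightarrow> \<not> muE m j > 0)"
      then obtain i where i: "k<i" "i\<le>K" "0 < muT m i" using E[OF k] by blast
      have i1: "i = k+1"
      proof (rule ccontr)
        assume "i \<noteq> k+1"
        hence "k+1 < i" using i by simp
        hence "k+1 < K" "0 < muE m (k+1)" using E[of "k+1"] i by auto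
        thus False using B by auto
      qed
      moreover have "\<not> muT m j > 0" if jj: "k+1 < j" "j \<le> K" for j
      proof
        assume "muT m j > 0"
        hence "k+1 < K" "0 < muE m (k+1)" using E[of "k+1"] jj by auto
        thus False using B by auto
      qed
      ultimately show "muT m (k+1) > 0 \<and> (\<forall>j. k+1 < j \<and> j \<le> K \<longrightarrow> \<not> muT m j > 0)" using i by blast
    qed
  qed
qed

end
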